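(* Under assumptions (A1)–(A6) below, for (almost) every $x$ in the support of $X$, $$\psi(x) = \Big[1-\frac{\mu_{10}(x)}{\mu_{11}(x)}\Big]\Big[1-\frac{\gamma_0(x)}{\gamma_1(x)}\Big],$$ $$\delta(x) = \Big[1-\frac{\mu_{00}(x)}{\mu_{11}(x)}\Big]\Big[1-\frac{\gamma_0(x)}{\gamma_1(x)}\Big] + \Big[1-\frac{\mu_{01}(x)}{\mu_{11}(x)}\Big]\frac{\gamma_0(x)}{\gamma_1(x)},$$ and $\zeta(x)=\delta(x)-\psi(x)$.
   Context: Observed data $O=(X,A,M,Y)$ with covariates $X\in\mathbb{R}^d$, binary exposure $A$, binary mediator $M$, binary outcome $Y$. For $a,m\in\{0,1\}$, $Y(a,m)$ denotes the potential outcome under $A=a,M=m$, $M(a)$ the potential mediator under $A=a$, and $Y(a):=Y(a,M(a))$; cross-world quantities $Y(a,M(a'))$ are defined by substitution. All are defined on a common probability space with $O$. Let $\mu_{am}(x)=P(Y=1\mid A=a,M=m,X=x)$ and $\gamma_a(x)=P(M=1\mid A=a,X=x)$. Estimands: $\delta(x)=P(Y(0)=0\mid Y(1)=1,M(1)=1,X=x)$ (total mediated probability of causation); $\psi(x)=P(Y(1,M(0))=0,\,Y(0,M(0))=0\mid Y(1,M(1))=1,M(1)=1,X=x)$ (probability of indirect causation); $\zeta(x)=P(Y(1,M(0))=1,\,Y(0,M(0))=0\mid Y(1,M(1))=1,M(1)=1,X=x)$ (probability of direct causation). Assumptions: (A1) consistency: for all $a,m$, $A=a,M=m\Rightarrow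 Y=Y(a,m)$ and $A=a\Rightarrow M=M(a)$. (A2) monotonicity: $Y(1,1)\ge Y(1,0)\ge Y(0,0)$, $Y(1,1)\ge Y(0,1)$, $M(1)\ge M(0)$. (A3) $A\perp\{Y(1,1),Y(1,0),Y(0,1),Y(0,0),M(1),M(0)\}\mid X$. (A4) cross-world ignorability: $\{Y(1,1),Y(1,0),Y(0,1),Y(0,0)\}\perp\{M(1),M(0)\}\mid X$. (A5) there is $\epsilon>0$ with $P\{\min_{a,m}P(A=a,M=m\mid X)\ge\epsilon\}=1$. (A6) $P\{P(Y=1\mid A=1,M=1,X)\ge\epsilon\}=1$. *)

theory Defs
  imports "HOL-Probability.Probability" "HOL-Probability.Conditional_Expectation"
begin

definition sigX :: "'a measure \<Rightarrow> ('a \<Rightarrow> 'x::topological_space) \<Rightarrow> 'a measure" where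
  "sigX M X = vimage_algebra (space M) X borel"

definition cprob :: "'a measure \<Rightarrow> ('a \<Rightarrow> 'x::topological_space) \<Rightarrow> 'a set \<Rightarrow> 'a \<Rightarrow> real" where
  "cprob M X E = real_cond_exp M (sigX M X) (indicator E :: 'a \<Rightarrow> real)"

definition ccprob :: "'a measure \<Rightarrow> ('a \<Rightarrow> 'x::topological_space) \<Rightarrow> 'a set \<Rightarrow> 'a set \<Rightarrow> 'a \<Rightarrow> real" where
  "ccprob M X E F = (\<lambda>\<omega>. cprob M X (E \<inter> F) \<omega> / cprob M X F \<omega>)"

definition cond_indep :: "'a measure \<Rightarrow> ('a \<Rightarrow> 'x::topological_space) \<Rightarrow> ('a \<Rightarrow> 'u) \<Rightarrow> ('a \<Rightarrow> 'v) \<Rightarrow> bool" where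
  "cond_indep M X U V \<longleftrightarrow>
     (\<forall>u v. AE \<omega> in M.
        cprob M X {\<omega>\<in>space M. U \<omega> = u \<and> V \<omega> = v} \<omega>
        = cprob M X {\<omega>\<in>space M. U \<omega> = u} \<omega> * cprob M X {\<omega>\<in>space M. V \<omega> = v} \<omega>)"

end

theory Submission
  imports Defs
begin

lemma sfs_sigX:
  assumes "prob_space M" "X \<in> borel_measurable M"
  shows "sigma_finite_subalgebra M (sigX M X)"
proof -
  interpret prob_space M by fact
  have "subalgebra M (sigX M X)"
    unfolding subalgebra_def sigX_def
    using sets_image_in_sets[of M "space M" X borel] assms(2) by auto
  then have "finite_measure_subalgebra M (sigX M X)"
    by (simp add: finite_measure_axioms finite_measure_subalgebra.intro finite_measure_subalgebra_axioms.intro)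
  then show ?thesis by (rule finite_measure_subalgebra_is_sigma_finite)
qed

lemma cprob_split:
  assumes P: "prob_space M" "X \<in> borel_measurable M"
    and E: "E \<in> sets M" "F \<in> sets M"
  shows "AE \<omega> in M. cprob M X E \<omega> = cprob M X (E \<inter> F) \<omega> + cprob M X (E - F) \<omega>"
proof -
  interpret prob_space M by fact
  interpret sigma_finite_subalgebra M "sigX M X" using sfs_sigX[OF P] .
  have i1: "integrable M (indicator (E \<inter> F) :: 'a \<Rightarrow> real)"
    using E by (intro integrable_real_indicator) (auto simp: less_top[symmetric])
  have i2: "integrable M (indicator (E - F) :: 'a \<Rightarrow> real)"
    using E by (intro integrable_real_indicator) (auto simp: less_top[symmetric])
  have eq: "(indicator E :: 'a \<Rightarrow> real) = (\<lambda>x. indicator (E \<inter> F) x + indicator (E - F) x)"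
    by (auto simp: indicator_def)
  show ?thesis unfolding cprob_def eq
    using real_cond_exp_add[OF i1 i2] .
qed

lemma cprob_split_pred:
  assumes P: "prob_space M" "X \<in> borel_measurable M"
    and E: "{x\<in>space M. p x} \<in> sets M" "{x\<in>space M. q x} \<in> sets M"
  shows "AE \<omega> in M. cprob M X {x\<in>space M. p x} \<omega>
      = cprob M X {x\<in>space M. p x \<and> q x} \<omega> + cprob M X {x\<in>space M. p x \<and> \<not> q x} \<omega>"
proof -
  have a: "{x\<in>space M. p x} \<inter> {x\<in>space M. q x} = {x\<in>space M. p x \<and> q x}" by auto
  have b: "{x\<in>space M. p x} - {x\<in>space M. q x} = {x\<in>space M. p x \<and> \<not> q x}" by auto
  show ?thesis using cprob_split[OF P E] unfolding a b .
qed

lemma cprob_empty: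
  assumes P: "prob_space M" "X \<in> borel_measurable M"
  shows "AE \<omega> in M. cprob M X {} \<omega> = 0"
  using cprob_split[OF P sets.empty_sets sets.empty_sets] by eventually_elim simp

lemma sets_pred_fun:
  assumes "U \<in> measurable M (count_space UNIV)"
  shows "{x\<in>space M. p (U x)} \<in> sets M"
proof -
  have "{x\<in>space M. p (U x)} = U -` {u. p u} \<inter> space M" by auto
  then show ?thesis using measurable_sets[OF assms, of "{u. p u}"] by simp
qed

lemma lin_aux:
  fixes a b c d e f g :: real
  shows "a = b + c \<Longrightarrow> d = e + g \<Longrightarrow> b = f * e \<Longrightarrow> c = f * g \<Longrightarrow> a = f * d"
  by (simp add: distrib_left)

lemma cprob_lift:
  fixes W :: "'a \<Rightarrow> 'v::finite"
  assumes P: "prob_space M" "X \<in> borel_measurable M"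
    and mW: "W \<in> measurable M (count_space UNIV)"
    and Pm: "{x\<in>space M. p x} \<in> sets M"
    and h: "\<And>v. AE \<omega> in M. cprob M X {x\<in>space M. p x \<and> W x = v} \<omega>
                 = f \<omega> * cprob M X {x\<in>space M. W x = v} \<omega>"
  shows "AE \<omega> in M. cprob M X {x\<in>space M. p x \<and> W x \<in> T} \<omega>
                 = f \<omega> * cprob M X {x\<in>space M. W x \<in> T} \<omega>"
proof -
  have "finite T" by simp
  then show ?thesis
  proof (induction T rule: finite_induct)
    case empty
    have e: "{x\<in>space M. p x \<and> W x \<in> {}} = {}" "{x\<in>space M. W x \<in> {}} = {}" by auto
    show ?case unfolding e using cprob_empty[OF P] by eventually_elim simp
  next
    case (insert u T)
    have mT: "{x\<in>space M. W x \<in> insert u T} \<in> sets M" "{x\<in>space M. W x = u} \<in> sets M"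
      using sets_pred_fun[OF mW] by auto
    have mpT: "{x\<in>space M. p x \<and> W x \<in> insert u T} \<in> sets M"
    proof -
      have "{x\<in>space M. p x \<and> W x \<in> insert u T} = {x\<in>space M. p x} \<inter> {x\<in>space M. W x \<in> insert u T}"
        by auto
      then show ?thesis using sets.Int[OF Pm mT(1)] by simp
    qed
    have s1: "AE \<omega> in M. cprob M X {x\<in>space M. p x \<and> W x \<in> insert u T} \<omega>
      = cprob M X {x\<in>space M. p x \<and> W x = u} \<omega> + cprob M X {x\<in>space M. p x \<and> W x \<in> T} \<omega>"
    proof -
      have e1: "{x\<in>space M. (p x \<and> W x \<in> insert u T) \<and> W x = u} = {x\<in>space M. p x \<and> W x = u}"
        by auto
      have e2: "{x\<in>space M. (p x \<and> W x \<in> insert u T) \<and> \<not> W x = u} = {x\<in>space M. p x \<and> W x \<in> T}"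
        using insert(2) by auto
      show ?thesis using cprob_split_pred[OF P mpT mT(2)] unfolding e1 e2 .
    qed
    have s2: "AE \<omega> in M. cprob M X {x\<in>space M. W x \<in> insert u T} \<omega>
      = cprob M X {x\<in>space M. W x = u} \<omega> + cprob M X {x\<in>space M. W x \<in> T} \<omega>"
    proof -
      have e1: "{x\<in>space M. W x \<in> insert u T \<and> W x = u} = {x\<in>space M. W x = u}"
        by auto
      have e2: "{x\<in>space M. W x \<in> insert u T \<and> \<not> W x = u} = {x\<in>space M. W x \<in> T}"
        using insert(2) by auto
      show ?thesis using cprob_split_pred[OF P mT(1) mT(2)] unfolding e1 e2 .
    qed
    show ?case using s1 s2 h[of u] insert(3) by eventually_elim (rule lin_aux; assumption)
  qed
qed

lemma cprob_indep:
  fixes U :: "'a \<Rightarrow> 'u::finite" and V :: "'a \<Rightarrow> 'v::finite"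
  assumes P: "prob_space M" "X \<in> borel_measurable M"
    and mU: "U \<in> measurable M (count_space UNIV)"
    and mV: "V \<in> measurable M (count_space UNIV)"
    and ci: "cond_indep M X U V"
  shows "AE \<omega> in M. cprob M X {x\<in>space M. U x \<in> S \<and> V x \<in> T} \<omega>
     = cprob M X {x\<in>space M. U x \<in> S} \<omega> * cprob M X {x\<in>space M. V x \<in> T} \<omega>"
proof -
  have st1: "AE \<omega> in M. cprob M X {x\<in>space M. V x = v \<and> U x \<in> S} \<omega>
     = cprob M X {x\<in>space M. V x = v} \<omega> * cprob M X {x\<in>space M. U x \<in> S} \<omega>" for v
  proof (rule cprob_lift[OF P mU])
    show "{x \<in> space M. V x = v} \<in> sets M" using sets_pred_fun[OF mV] by auto
    fix u
    have e: "{x\<in>space M. V x = v \<and> U x = u} = {x\<in>space M. U x = u \<and> V x = v}" by auto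
    show "AE \<omega> in M. cprob M X {x\<in>space M. V x = v \<and> U x = u} \<omega>
         = cprob M X {x\<in>space M. V x = v} \<omega> * cprob M X {x\<in>space M. U x = u} \<omega>"
      using ci unfolding cond_indep_def e by (auto simp: mult.commute)
  qed
  show ?thesis
  proof (rule cprob_lift[OF P mV])
    show "{x \<in> space M. U x \<in> S} \<in> sets M" using sets_pred_fun[OF mU] by auto
    fix v
    have e: "{x\<in>space M. U x \<in> S \<and> V x = v} = {x\<in>space M. V x = v \<and> U x \<in> S}" by auto
    show "AE \<omega> in M. cprob M X {x\<in>space M. U x \<in> S \<and> V x = v} \<omega>
         = cprob M X {x\<in>space M. U x \<in> S} \<omega> * cprob M X {x\<in>space M. V x = v} \<omega>"
      using st1[of v] unfolding e by (auto simp: mult.commute)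
  qed
qed

lemma arith_core:
  fixes eps pT pF qTT qTF qFT qFF DTT DTF DFT DFF NTT NTF NFT NFF rTT rTF rFT rFF
    yTT yTF yFT yFF NGT NGF mT mF cnd psiN delN zetN a1 b1 d1 d2 a2 a3 :: real
  assumes eps: "eps > 0"
    and "DTT = pT * qTT" "DTF = pT * qTF" "DFT = pF * qFT" "DFF = pF * qFF"
    and "NTT = pT * rTT" "NTF = pT * rTF" "NFT = pF * rFT" "NFF = pF * rFF"
    and "rTT = yTT * qTT" "rTF = yTF * qTF" "rFT = yFT * qFT" "rFF = yFF * qFF"
    and "NGT = pT * mT" "NGF = pF * mF" "qTT = mT" "qFT = mF"
    and "DTT \<ge> eps" "DTF \<ge> eps" "DFT \<ge> eps" "DFF \<ge> eps" "NTT / DTT \<ge> eps"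
    and "cnd = yTT * mT" "psiN = a1 * b1" "yTT = yTF + a1" "mT = mF + b1"
    and "delN = d1 + d2" "d1 = a2 * mF" "d2 = a3 * b1" "yTT = yFT + a2" "yTT = yFF + a3"
    and "delN = zetN + psiN"
  shows "psiN / cnd = (1 - (NTF / DTF) / (NTT / DTT)) * (1 - (NGF / pF) / (NGT / pT))
       \<and> delN / cnd = (1 - (NFF / DFF) / (NTT / DTT)) * (1 - (NGF / pF) / (NGT / pT))
                   + (1 - (NFT / DFT) / (NTT / DTT)) * ((NGF / pF) / (NGT / pT))
       \<and> zetN / cnd = delN / cnd - psiN / cnd"
proof -
  note h = assms
  have nz: "pT \<noteq> 0" "pF \<noteq> 0" "qTT \<noteq> 0" "qTF \<noteq> 0" "qFT \<noteq> 0" "qFF \<noteq> 0"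
    using h eps by (metis mult_zero_left mult_zero_right not_less)+
  have mu: "NTT / DTT = yTT" "NTF / DTF = yTF" "NFT / DFT = yFT" "NFF / DFF = yFF"
    using h nz by simp_all
  have ga: "NGT / pT = mT" "NGF / pF = mF" using h nz by simp_all
  have y: "yTT \<noteq> 0" using h(22) mu eps by auto
  have m: "mT \<noteq> 0" using nz h by simp
  have a: "a1 = yTT - yTF" "b1 = mT - mF" "a2 = yTT - yFT" "a3 = yTT - yFF" using h by linarith+
  have p1: "psiN / cnd = (1 - yTF / yTT) * (1 - mF / mT)"
    using y m by (simp add: h(23,24) a field_simps)
  have p2: "delN / cnd = (1 - yFF / yTT) * (1 - mF / mT) + (1 - yFT / yTT) * (mF / mT)"
    using y m by (simp add: h(23,27,28,29) a field_simps)
  have p3: "zetN / cnd = delN / cnd - psiN / cnd"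
    using h(32) by (simp add: add_divide_distrib)
  show ?thesis unfolding mu ga using p1 p2 p3 by simp
qed

lemma Collect_Int_space: "{x\<in>S. P x} \<inter> {x\<in>S. Q x} = {x\<in>S. P x \<and> Q x}"
  by auto

definition ysel :: "bool \<Rightarrow> bool \<Rightarrow> bool \<times> bool \<times> bool \<times> bool \<Rightarrow> bool" where
  "ysel a m t = (case t of (y11, y10, y01, y00) \<Rightarrow>
      if a then (if m then y11 else y10) else (if m then y01 else y00))"

definition msel :: "bool \<Rightarrow> bool \<times> bool \<Rightarrow> bool" where
  "msel a s = (if a then fst s else snd s)"


lemma indep_inst:
  fixes U :: "'a \<Rightarrow> 'u::finite" and V :: "'a \<Rightarrow> 'v::finite"
  assumes P: "prob_space M" "X \<in> borel_measurable M"
    and mU: "U \<in> measurable M (count_space UNIV)"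
    and mV: "V \<in> measurable M (count_space UNIV)"
    and ci: "cond_indep M X U V"
    and e: "S = {x\<in>space M. ys (U x) \<and> ms (V x)}" "S1 = {x\<in>space M. ys (U x)}"
       "S2 = {x\<in>space M. ms (V x)}"
  shows "AE \<omega> in M. cprob M X S \<omega> = cprob M X S1 \<omega> * cprob M X S2 \<omega>"
  using cprob_indep[OF P mU mV ci, of "Collect ys" "Collect ms"] e by simp

lemma split_inst:
  assumes P: "prob_space M" "X \<in> borel_measurable M"
    and a: "S = {x\<in>space M. p x}" "S1 = {x\<in>space M. p x \<and> q x}" "S2 = {x\<in>space M. p x \<and> \<not> q x}"
      "{x\<in>space M. p x} \<in> sets M" "{x\<in>space M. q x} \<in> sets M"
  shows "AE \<omega> in M. cprob M X S \<omega> = cprob M X S1 \<omega> + cprob M X S2 \<omega>"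
  using cprob_split_pred[OF P a(4,5)] a(1-3) by simp

theorem theorem1:
  fixes M :: "'a measure"
    and X :: "'a \<Rightarrow> real ^ 'd"
    and A Mv Y :: "'a \<Rightarrow> bool"
    and Ypo :: "bool \<Rightarrow> bool \<Rightarrow> 'a \<Rightarrow> bool"
    and Mpo :: "bool \<Rightarrow> 'a \<Rightarrow> bool"
    and eps :: real
  assumes prob: "prob_space M"
    and mX: "X \<in> borel_measurable M"
    and mA: "A \<in> measurable M (count_space UNIV)"
    and mM: "Mv \<in> measurable M (count_space UNIV)"
    and mY: "Y \<in> measurable M (count_space UNIV)"
    and mYpo: "\<And>a m. Ypo a m \<in> measurable M (count_space UNIV)"
    and mMpo: "\<And>a. Mpo a \<in> measurable M (count_space UNIV)"
    \<comment> \<open>(A1) consistency\<close>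
    and A1Y: "\<And>\<omega> a m. \<omega> \<in> space M \<Longrightarrow> A \<omega> = a \<Longrightarrow> Mv \<omega> = m \<Longrightarrow> Y \<omega> = Ypo a m \<omega>"
    and A1M: "\<And>\<omega> a. \<omega> \<in> space M \<Longrightarrow> A \<omega> = a \<Longrightarrow> Mv \<omega> = Mpo a \<omega>"
    \<comment> \<open>(A2) monotonicity (True = 1, False = 0)\<close>
    and A2: "\<And>\<omega>. \<omega> \<in> space M \<Longrightarrow>
               (Ypo True False \<omega> \<longrightarrow> Ypo True True \<omega>) \<and>
               (Ypo False False \<omega> \<longrightarrow> Ypo True False \<omega>) \<and>
               (Ypo False True \<omega> \<longrightarrow> Ypo True True \<omega>) \<and>
               (Mpo False \<omega> \<longrightarrow> Mpo True \<omega>)"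
    \<comment> \<open>(A3) exposure ignorability given X\<close>
    and A3: "cond_indep M X A
               (\<lambda>\<omega>. ((Ypo True True \<omega>, Ypo True False \<omega>, Ypo False True \<omega>, Ypo False False \<omega>),
                     (Mpo True \<omega>, Mpo False \<omega>)))"
    \<comment> \<open>(A4) cross-world ignorability given X\<close>
    and A4: "cond_indep M X
               (\<lambda>\<omega>. (Ypo True True \<omega>, Ypo True False \<omega>, Ypo False True \<omega>, Ypo False False \<omega>))
               (\<lambda>\<omega>. (Mpo True \<omega>, Mpo False \<omega>))"
    \<comment> \<open>(A5) positivity\<close>
    and eps_pos: "eps > 0"
    and A5: "AE \<omega> in M. \<forall>a m. cprob M X {\<omega>\<in>space M. A \<omega> = a \<and> Mv \<omega> = m} \<omega> \<ge> eps"
    \<comment> \<open>(A6)\<close>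
    and A6: "AE \<omega> in M. ccprob M X {\<omega>\<in>space M. Y \<omega>} {\<omega>\<in>space M. A \<omega> \<and> Mv \<omega>} \<omega> \<ge> eps"
  shows
    "let mu = (\<lambda>a m. ccprob M X {\<omega>\<in>space M. Y \<omega>} {\<omega>\<in>space M. A \<omega> = a \<and> Mv \<omega> = m});
         gam = (\<lambda>a. ccprob M X {\<omega>\<in>space M. Mv \<omega>} {\<omega>\<in>space M. A \<omega> = a});
         cnd = {\<omega>\<in>space M. Ypo True (Mpo True \<omega>) \<omega> \<and> Mpo True \<omega>};
         delta = ccprob M X {\<omega>\<in>space M. \<not> Ypo False (Mpo False \<omega>) \<omega>} cnd;
         psi = ccprob M X {\<omega>\<in>space M. \<not> Ypo True (Mpo False \<omega>) \<omega> \<and> \<not> Ypo False (Mpo False \<omega>) \<omega>} cnd;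
         zeta = ccprob M X {\<omega>\<in>space M. Ypo True (Mpo False \<omega>) \<omega> \<and> \<not> Ypo False (Mpo False \<omega>) \<omega>} cnd
     in AE \<omega> in M.
          psi \<omega> = (1 - mu True False \<omega> / mu True True \<omega>) * (1 - gam False \<omega> / gam True \<omega>)
        \<and> delta \<omega> = (1 - mu False False \<omega> / mu True True \<omega>) * (1 - gam False \<omega> / gam True \<omega>)
                    + (1 - mu False True \<omega> / mu True True \<omega>) * (gam False \<omega> / gam True \<omega>)
        \<and> zeta \<omega> = delta \<omega> - psi \<omega>"
  proof -
  note P = prob mX
  interpret prob_space M by (rule prob)
  note [measurable] = mA mM mY mYpo mMpo
  define Y4 where "Y4 = (\<lambda>\<omega>. (Ypo True True \<omega>, Ypo True False \<omega>, Ypo False True \<omega>, Ypo False False \<omega>))"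
  define M2 where "M2 = (\<lambda>\<omega>. (Mpo True \<omega>, Mpo False \<omega>))"
  define V6 where "V6 = (\<lambda>\<omega>. (Y4 \<omega>, M2 \<omega>))"
  have A3': "cond_indep M X A V6" using A3 unfolding V6_def Y4_def M2_def .
  have A4': "cond_indep M X Y4 M2" using A4 unfolding Y4_def M2_def .
  have mY4: "Y4 \<in> measurable M (count_space UNIV)"
    unfolding measurable_count_space_eq2_countable
  proof (intro conjI ballI)
    fix t :: "bool \<times> bool \<times> bool \<times> bool"
    obtain a b c d where t: "t = (a, b, c, d)" by (cases t)
    have "Y4 -` {t} \<inter> space M = {x\<in>space M. Ypo True True x = a \<and> Ypo True False x = b
        \<and> Ypo False True x = c \<and> Ypo False False x = d}" by (auto simp: t Y4_def)
    also have "\<dots> \<in> sets M" by measurable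
    finally show "Y4 -` {t} \<inter> space M \<in> sets M" .
  qed simp
  have mM2: "M2 \<in> measurable M (count_space UNIV)"
    unfolding measurable_count_space_eq2_countable
  proof (intro conjI ballI)
    fix t :: "bool \<times> bool"
    obtain a b where t: "t = (a, b)" by (cases t)
    have "M2 -` {t} \<inter> space M = {x\<in>space M. Mpo True x = a \<and> Mpo False x = b}"
      by (auto simp: t M2_def)
    also have "\<dots> \<in> sets M" by measurable
    finally show "M2 -` {t} \<inter> space M \<in> sets M" .
  qed simp
  have mV6: "V6 \<in> measurable M (count_space UNIV)"
    unfolding measurable_count_space_eq2_countable
  proof (intro conjI ballI)
    fix t :: "(bool \<times> bool \<times> bool \<times> bool) \<times> bool \<times> bool"
    obtain a b where t: "t = (a, b)" by (cases t)
    have "V6 -` {t} \<inter> space M = (Y4 -` {a} \<inter> space M) \<inter> (M2 -` {b} \<inter> space M)"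
      by (auto simp: t V6_def)
    also have "\<dots> \<in> sets M" using measurable_sets[OF mY4, of "{a}"] measurable_sets[OF mM2, of "{b}"] by auto
    finally show "V6 -` {t} \<inter> space M \<in> sets M" .
  qed simp

  have cM: "\<omega> \<in> space M \<Longrightarrow> Mv \<omega> = Mpo (A \<omega>) \<omega>" for \<omega> using A1M by blast
  have cYY: "\<omega> \<in> space M \<Longrightarrow> Y \<omega> = Ypo (A \<omega>) (Mv \<omega>) \<omega>" for \<omega> using A1Y by blast
  have ysel: "ysel a m (Y4 x) = Ypo a m x" for a m x
    by (cases a; cases m) (auto simp: ysel_def Y4_def)
  have msel: "msel a (M2 x) = Mpo a x" for a x
    by (cases a) (auto simp: msel_def M2_def)

  have H1: "AE \<omega> in M. cprob M X {x\<in>space M. A x = a \<and> Mv x = m} \<omega>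
      = cprob M X {x\<in>space M. A x = a} \<omega> * cprob M X {x\<in>space M. Mpo a x = m} \<omega>" for a m
  proof -
    have e1: "{x\<in>space M. A x \<in> {a} \<and> V6 x \<in> {t. msel a (snd t) = m}} = {x\<in>space M. A x = a \<and> Mv x = m}"
      by (auto simp: V6_def msel cM)
    have e2: "{x\<in>space M. A x \<in> {a}} = {x\<in>space M. A x = a}" by auto
    have e3: "{x\<in>space M. V6 x \<in> {t. msel a (snd t) = m}} = {x\<in>space M. Mpo a x = m}"
      by (auto simp: V6_def msel)
    show ?thesis using cprob_indep[OF P mA mV6 A3', of "{a}" "{t. msel a (snd t) = m}"]
      unfolding e1 e2 e3 .
  qed
  have H2: "AE \<omega> in M. cprob M X {x\<in>space M. Y x \<and> A x = a \<and> Mv x = m} \<omega>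
      = cprob M X {x\<in>space M. A x = a} \<omega> * cprob M X {x\<in>space M. Ypo a m x \<and> Mpo a x = m} \<omega>" for a m
  proof -
    have e1: "{x\<in>space M. A x \<in> {a} \<and> V6 x \<in> {t. ysel a m (fst t) \<and> msel a (snd t) = m}}
         = {x\<in>space M. Y x \<and> A x = a \<and> Mv x = m}"
      by (auto simp: V6_def msel ysel cM cYY)
    have e2: "{x\<in>space M. A x \<in> {a}} = {x\<in>space M. A x = a}" by auto
    have e3: "{x\<in>space M. V6 x \<in> {t. ysel a m (fst t) \<and> msel a (snd t) = m}} = {x\<in>space M. Ypo a m x \<and> Mpo a x = m}"
      by (auto simp: V6_def msel ysel)
    show ?thesis using cprob_indep[OF P mA mV6 A3', of "{a}" "{t. ysel a m (fst t) \<and> msel a (snd t) = m}"]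
      unfolding e1 e2 e3 .
  qed
  have H3: "AE \<omega> in M. cprob M X {x\<in>space M. Ypo a m x \<and> Mpo a x = m} \<omega>
      = cprob M X {x\<in>space M. Ypo a m x} \<omega> * cprob M X {x\<in>space M. Mpo a x = m} \<omega>" for a m
  proof -
    have e1: "{x\<in>space M. Y4 x \<in> {t. ysel a m t} \<and> M2 x \<in> {s. msel a s = m}}
         = {x\<in>space M. Ypo a m x \<and> Mpo a x = m}"
      by (auto simp: msel ysel)
    have e2: "{x\<in>space M. Y4 x \<in> {t. ysel a m t}} = {x\<in>space M. Ypo a m x}" by (auto simp: ysel)
    have e3: "{x\<in>space M. M2 x \<in> {s. msel a s = m}} = {x\<in>space M. Mpo a x = m}"
      by (auto simp: msel)
    show ?thesis using cprob_indep[OF P mY4 mM2 A4', of "{t. ysel a m t}" "{s. msel a s = m}"]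
      unfolding e1 e2 e3 .
  qed
  have H4: "AE \<omega> in M. cprob M X {x\<in>space M. Mv x \<and> A x = a} \<omega>
      = cprob M X {x\<in>space M. A x = a} \<omega> * cprob M X {x\<in>space M. Mpo a x} \<omega>" for a
  proof -
    have e1: "{x\<in>space M. Mv x \<and> A x = a} = {x\<in>space M. A x = a \<and> Mv x = True}" by auto
    have e2: "{x\<in>space M. Mpo a x} = {x\<in>space M. Mpo a x = True}" by auto
    show ?thesis unfolding e1 e2 by (rule H1)
  qed
  have A4g: "AE \<omega> in M. cprob M X {x\<in>space M. ys (Y4 x) \<and> ms (M2 x)} \<omega>
      = cprob M X {x\<in>space M. ys (Y4 x)} \<omega> * cprob M X {x\<in>space M. ms (M2 x)} \<omega>" for ys ms
    using cprob_indep[OF P mY4 mM2 A4', of "Collect ys" "Collect ms"] by simp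


  have cY: "Ypo a (Mpo b x) x = ((Mpo b x \<and> Ypo a True x) \<or> (\<not> Mpo b x \<and> Ypo a False x))" for a b x
    by (cases "Mpo b x") auto
  have m1: "Ypo True False x \<Longrightarrow> x \<in> space M \<Longrightarrow> Ypo True True x" for x using A2 by blast
  have m2: "Ypo False False x \<Longrightarrow> x \<in> space M \<Longrightarrow> Ypo True False x" for x using A2 by blast
  have m3: "Ypo False True x \<Longrightarrow> x \<in> space M \<Longrightarrow> Ypo True True x" for x using A2 by blast
  have m4: "Mpo False x \<Longrightarrow> x \<in> space M \<Longrightarrow> Mpo True x" for x using A2 by blast
  have Q: "cprob M X {x\<in>space M. Mpo a x = True} \<omega> = cprob M X {x\<in>space M. Mpo a x} \<omega>" for a \<omega>
    by simp
  have A5i: "AE \<omega> in M. cprob M X {x\<in>space M. A x = a \<and> Mv x = m} \<omega> \<ge> eps" for a m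
    using A5 by eventually_elim blast
  have A6': "AE \<omega> in M. cprob M X {x\<in>space M. Y x \<and> A x = True \<and> Mv x = True} \<omega>
      / cprob M X {x\<in>space M. A x = True \<and> Mv x = True} \<omega> \<ge> eps"
    using A6 by (simp add: ccprob_def Collect_Int_space)

  have C1: "AE \<omega> in M. cprob M X {x\<in>space M. Ypo True (Mpo True x) x \<and> Mpo True x} \<omega>
     = cprob M X {x\<in>space M. Ypo True True x} \<omega> * cprob M X {x\<in>space M. Mpo True x} \<omega>"
    by (rule indep_inst[OF P mY4 mM2 A4', where ys="\<lambda>t. fst t" and ms="\<lambda>s. fst s"]) (auto simp: cY Y4_def M2_def)
  have P1: "AE \<omega> in M. cprob M X {x\<in>space M. (\<not> Ypo True (Mpo False x) x \<and> \<not> Ypo False (Mpo False x) x)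
        \<and> Ypo True (Mpo True x) x \<and> Mpo True x} \<omega>
     = cprob M X {x\<in>space M. Ypo True True x \<and> \<not> Ypo True False x} \<omega>
       * cprob M X {x\<in>space M. Mpo True x \<and> \<not> Mpo False x} \<omega>"
    by (rule indep_inst[OF P mY4 mM2 A4', where ys="\<lambda>t. fst t \<and> \<not> fst (snd t)" and ms="\<lambda>s. fst s \<and> \<not> snd s"])
       (auto simp: cY Y4_def M2_def dest: m1 m2 m3 m4)
  have P2: "AE \<omega> in M. cprob M X {x\<in>space M. Ypo True True x} \<omega>
     = cprob M X {x\<in>space M. Ypo True False x} \<omega> + cprob M X {x\<in>space M. Ypo True True x \<and> \<not> Ypo True False x} \<omega>"
    apply (rule split_inst[OF P, where p="\<lambda>x. Ypo True True x" and q="\<lambda>x. Ypo True False x"])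
    subgoal by (auto dest: m1)
    subgoal by (auto dest: m1)
    subgoal by (auto dest: m1)
    subgoal by measurable
    subgoal by measurable
    done
  have P3: "AE \<omega> in M. cprob M X {x\<in>space M. Mpo True x} \<omega>
     = cprob M X {x\<in>space M. Mpo False x} \<omega> + cprob M X {x\<in>space M. Mpo True x \<and> \<not> Mpo False x} \<omega>"
    apply (rule split_inst[OF P, where p="\<lambda>x. Mpo True x" and q="\<lambda>x. Mpo False x"])
    subgoal by (auto dest: m4)
    subgoal by (auto dest: m4)
    subgoal by (auto dest: m4)
    subgoal by measurable
    subgoal by measurable
    done
  have D1: "AE \<omega> in M. cprob M X {x\<in>space M. \<not> Ypo False (Mpo False x) x \<and> Ypo True (Mpo True x) x \<and> Mpo True x} \<omega>
     = cprob M X {x\<in>space M. (Ypo True True x \<and> \<not> Ypo False True x) \<and> (Mpo True x \<and> Mpo False x)} \<omega>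
       + cprob M X {x\<in>space M. (Ypo True True x \<and> \<not> Ypo False False x) \<and> (Mpo True x \<and> \<not> Mpo False x)} \<omega>"
    apply (rule split_inst[OF P, where p="\<lambda>x. ((Mpo False x \<and> \<not> Ypo False True x) \<or> (\<not> Mpo False x \<and> \<not> Ypo False False x))
                     \<and> Ypo True True x \<and> Mpo True x" and q="\<lambda>x. Mpo False x"])
    subgoal by (auto simp: cY dest: m4)
    subgoal by (auto simp: cY dest: m4)
    subgoal by (auto simp: cY dest: m4)
    subgoal by measurable
    subgoal by measurable
    done
  have D2: "AE \<omega> in M. cprob M X {x\<in>space M. (Ypo True True x \<and> \<not> Ypo False True x) \<and> (Mpo True x \<and> Mpo False x)} \<omega>
     = cprob M X {x\<in>space M. Ypo True True x \<and> \<not> Ypo False True x} \<omega> * cprob M X {x\<in>space M. Mpo False x} \<omega>"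
    by (rule indep_inst[OF P mY4 mM2 A4', where ys="\<lambda>t. fst t \<and> \<not> fst (snd (snd t))" and ms="\<lambda>s. snd s"])
       (auto simp: Y4_def M2_def dest: m4)
  have D3: "AE \<omega> in M. cprob M X {x\<in>space M. (Ypo True True x \<and> \<not> Ypo False False x) \<and> (Mpo True x \<and> \<not> Mpo False x)} \<omega>
     = cprob M X {x\<in>space M. Ypo True True x \<and> \<not> Ypo False False x} \<omega> * cprob M X {x\<in>space M. Mpo True x \<and> \<not> Mpo False x} \<omega>"
    by (rule indep_inst[OF P mY4 mM2 A4', where ys="\<lambda>t. fst t \<and> \<not> snd (snd (snd t))" and ms="\<lambda>s. fst s \<and> \<not> snd s"])
       (auto simp: Y4_def M2_def)
  have D4: "AE \<omega> in M. cprob M X {x\<in>space M. Ypo True True x} \<omega>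
     = cprob M X {x\<in>space M. Ypo False True x} \<omega> + cprob M X {x\<in>space M. Ypo True True x \<and> \<not> Ypo False True x} \<omega>"
    apply (rule split_inst[OF P, where p="\<lambda>x. Ypo True True x" and q="\<lambda>x. Ypo False True x"])
    subgoal by (auto dest: m3)
    subgoal by (auto dest: m3)
    subgoal by (auto dest: m3)
    subgoal by measurable
    subgoal by measurable
    done
  have D5: "AE \<omega> in M. cprob M X {x\<in>space M. Ypo True True x} \<omega>
     = cprob M X {x\<in>space M. Ypo False False x} \<omega> + cprob M X {x\<in>space M. Ypo True True x \<and> \<not> Ypo False False x} \<omega>"
    apply (rule split_inst[OF P, where p="\<lambda>x. Ypo True True x" and q="\<lambda>x. Ypo False False x"])
    subgoal by (auto dest: m1 m2)
    subgoal by (auto dest: m1 m2)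
    subgoal by (auto dest: m1 m2)
    subgoal by measurable
    subgoal by measurable
    done
  have Z: "AE \<omega> in M. cprob M X {x\<in>space M. \<not> Ypo False (Mpo False x) x \<and> Ypo True (Mpo True x) x \<and> Mpo True x} \<omega>
     = cprob M X {x\<in>space M. (Ypo True (Mpo False x) x \<and> \<not> Ypo False (Mpo False x) x) \<and> Ypo True (Mpo True x) x \<and> Mpo True x} \<omega>
       + cprob M X {x\<in>space M. (\<not> Ypo True (Mpo False x) x \<and> \<not> Ypo False (Mpo False x) x) \<and> Ypo True (Mpo True x) x \<and> Mpo True x} \<omega>"
    apply (rule split_inst[OF P, where p="\<lambda>x. ((Mpo False x \<and> \<not> Ypo False True x) \<or> (\<not> Mpo False x \<and> \<not> Ypo False False x))
                     \<and> Ypo True True x \<and> Mpo True x" and q="\<lambda>x. (Mpo False x \<and> Ypo True True x) \<or> (\<not> Mpo False x \<and> Ypo True False x)"])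
    subgoal by (auto simp: cY)
    subgoal by (auto simp: cY)
    subgoal by (auto simp: cY)
    subgoal by measurable
    subgoal by measurable
    done

  show ?thesis
    unfolding Let_def ccprob_def Collect_Int_space
    using H1[of True True] H1[of True False] H1[of False True] H1[of False False]
      H2[of True True] H2[of True False] H2[of False True] H2[of False False]
      H3[of True True] H3[of True False] H3[of False True] H3[of False False]
      H4[of True] H4[of False]
      A5i[of True True] A5i[of True False] A5i[of False True] A5i[of False False] A6'
      C1 P1 P2 P3 D1 D2 D3 D4 D5 Z
  proof eventually_elim
    case (elim \<omega>)
    show ?case
      using elim Q[of True \<omega>] Q[of False \<omega>]
      by (intro arith_core[OF eps_pos]) assumption+
  qed
qed

end
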